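(* Let $A$ be an integral domain with field of fractions $F$. The following are equivalent: (1) $\Gamma(A)$ is path-connected. (2) For every Bézout point $x\in\mathbb{P}^1(F)$ there exist $a_0,\ldots,a_n\in A$ with $x=\infty\cdot S(a_n)S(a_{n-1})\cdots S(a_0)$. (3) Every Bézout pair satisfies a weak Euclidean algorithm. (4) $A$ is a $\mathrm{GE}_2$-ring. (5) Every Bézout point in $\mathbb{P}^1(F)$ admits a finite continued fraction expansion $a_0+\cfrac{1}{a_1+\cfrac{1}{\ddots+\cfrac{1}{a_n}}}$ with entries $a_i\in A$.
   Context: A unimodular row over $A$ is $(a,b)\in A^2$ with $aA+bA=A$. $\Gamma(A)$ is the graph whose vertices are classes of unimodular rows modulo multiplication by units, with $\{[u],[v]\}$ an edge iff the matrix with rows $u,v$ lies in $\mathrm{GL}_2(A)$. A Bézout pair is $(a,b)\in A^2\setminus\{(0,0)\}$ such that the ideal $\langle a,b\rangle$ is principal; a Bézout point is an element $a/b\in\mathbb{P}^1(F)=F\cup\{\infty\}$ with $(a,b)$ a Bézout pair. $\mathrm{GL}_2(A)$ acts on $\mathbb{P}^1(F)$ on the right by $q\cdot\begin{pmatrix}a&b\\c&d\end{pmatrix}=\frac{aq+c}{bq+d}$. $S(a)=\begin{pmatrix}a&1\\1&0\end{pmatrix}$. A pair $(a,b)$ satisfies a weak Euclidean algorithm if there exist $a_0,\ldots,a_n,r_0,\ldots,r_{n-1}\in A$ such that with $r_{-2}=a,r_{-1}=b,r_n=0$ one has $r_{k-2}=a_kr_{k-1}+r_k$ for $0\le k\le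 n$. $A$ is a $\mathrm{GE}_2$-ring if $\mathrm{GL}_2(A)$ is generated by elementary matrices and invertible diagonal matrices. *)

theory Defs
  imports "HOL-Computational_Algebra.Fraction_Field" "HOL-Computational_Algebra.Polynomial_Factorial"
begin

text \<open>2x2 matrices over a ring: (a,b,c,d) stands for the matrix with rows (a,b) and (c,d).\<close>
type_synonym 'a m2 = "'a \<times> 'a \<times> 'a \<times> 'a"

definition m2_mult :: "'a::comm_ring_1 m2 \<Rightarrow> 'a m2 \<Rightarrow> 'a m2" where
  "m2_mult M N = (case M of (a,b,c,d) \<Rightarrow> case N of (e,f,g,h) \<Rightarrow>
      (a*e + b*g, a*f + b*h, c*e + d*g, c*f + d*h))"

definition m2_one :: "'a::comm_ring_1 m2" where
  "m2_one = (1,0,0,1)"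

definition m2_det :: "'a::comm_ring_1 m2 \<Rightarrow> 'a" where
  "m2_det M = (case M of (a,b,c,d) \<Rightarrow> a*d - b*c)"

definition GL2 :: "'a::comm_ring_1 m2 set" where
  "GL2 = {M. m2_det M dvd 1}"

definition elem_or_diag :: "'a::comm_ring_1 m2 set" where
  "elem_or_diag = {(1,t,0,1) | t. True} \<union> {(1,0,t,1) | t. True}
                 \<union> {(u,0,0,v) | u v. u dvd 1 \<and> v dvd 1}"

inductive_set gen_subgroup :: "'a::comm_ring_1 m2 set \<Rightarrow> 'a m2 set" for G where
  one: "m2_one \<in> gen_subgroup G"
| gen: "g \<in> G \<Longrightarrow> g \<in> gen_subgroup G"
| mult: "M \<in> gen_subgroup G \<Longrightarrow> N \<in> gen_subgroup G \<Longrightarrow> m2_mult M N \<in> gen_subgroup G"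
| inv: "M \<in> gen_subgroup G \<Longrightarrow> m2_mult N M = m2_one \<Longrightarrow> N \<in> gen_subgroup G"

definition GE2_ring :: "'a::comm_ring_1 itself \<Rightarrow> bool" where
  "GE2_ring _ \<longleftrightarrow> (GL2 :: 'a m2 set) = gen_subgroup elem_or_diag"

definition unimodular :: "'a::comm_ring_1 \<times> 'a \<Rightarrow> bool" where
  "unimodular r \<longleftrightarrow> (case r of (a,b) \<Rightarrow> (\<exists>x y. x*a + y*b = 1))"

definition unimod_rows :: "('a::comm_ring_1 \<times> 'a) set" where
  "unimod_rows = {r. unimodular r}"

definition unit_equiv :: "(('a::comm_ring_1 \<times> 'a) \<times> ('a \<times> 'a)) set" where
  "unit_equiv = {((a,b),(c,d)). unimodular (a,b) \<and> unimodular (c,d) \<and>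
                   (\<exists>u. u dvd 1 \<and> c = u*a \<and> d = u*b)}"

definition Gamma_vertices :: "'a::comm_ring_1 itself \<Rightarrow> ('a \<times> 'a) set set" where
  "Gamma_vertices _ = unimod_rows // unit_equiv"

definition Gamma_edges :: "'a::comm_ring_1 itself \<Rightarrow> (('a \<times> 'a) set \<times> ('a \<times> 'a) set) set" where
  "Gamma_edges T = {(X,Y). X \<in> Gamma_vertices T \<and> Y \<in> Gamma_vertices T \<and>
      (\<exists>a b c d. (a,b) \<in> X \<and> (c,d) \<in> Y \<and> (a,b,c,d) \<in> GL2)}"

definition Gamma_path_connected :: "'a::comm_ring_1 itself \<Rightarrow> bool" where
  "Gamma_path_connected T \<longleftrightarrow>
     (\<forall>X \<in> Gamma_vertices T. \<forall>Y \<in> Gamma_vertices T. (X,Y) \<in> (Gamma_edges T)\<^sup>*)"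

datatype 'f P1 = Fin 'f | Infty

definition hom_pt :: "'f::field \<Rightarrow> 'f \<Rightarrow> 'f P1" where
  "hom_pt x y = (if y = 0 then Infty else Fin (x / y))"

text \<open>Right action of GL_2(A) on P^1(F): q . (a b; c d) = (aq + c)/(bq + d),
  computed in homogeneous coordinates (row vector times matrix).\<close>
definition act :: "'a::idom fract P1 \<Rightarrow> 'a m2 \<Rightarrow> 'a fract P1" where
  "act q M = (case M of (a,b,c,d) \<Rightarrow>
     (case q of
        Fin t \<Rightarrow> hom_pt (to_fract a * t + to_fract c) (to_fract b * t + to_fract d)
      | Infty \<Rightarrow> hom_pt (to_fract a) (to_fract b)))"

definition S :: "'a::comm_ring_1 \<Rightarrow> 'a m2" where
  "S a = (a,1,1,0)"

text \<open>S_prod [a_0,...,a_n] = S(a_n) S(a_{n-1}) ... S(a_0).\<close>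
definition S_prod :: "'a::comm_ring_1 list \<Rightarrow> 'a m2" where
  "S_prod as = foldl (\<lambda>M a. m2_mult (S a) M) m2_one as"

definition bezout_pair :: "'a::comm_ring_1 \<Rightarrow> 'a \<Rightarrow> bool" where
  "bezout_pair a b \<longleftrightarrow> (a,b) \<noteq> (0,0) \<and>
     (\<exists>d. {x*a + y*b | x y. True} = {d*z | z. True})"

definition bezout_point :: "'a::idom fract P1 \<Rightarrow> bool" where
  "bezout_point p \<longleftrightarrow> (\<exists>a b. bezout_pair a b \<and> p = hom_pt (to_fract a) (to_fract b))"

text \<open>Weak Euclidean algorithm; r k here is r_{k-2} in the paper.\<close>
definition weak_euclid :: "'a::comm_ring_1 \<Rightarrow> 'a \<Rightarrow> bool" where
  "weak_euclid a b \<longleftrightarrow> (\<exists>(n::nat) (q::nat \<Rightarrow> 'a) (r::nat \<Rightarrow> 'a).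
      r 0 = a \<and> r 1 = b \<and> r (n+2) = 0 \<and>
      (\<forall>k\<le>n. r k = q k * r (k+1) + r (k+2)))"

fun P1_inverse :: "'f::field P1 \<Rightarrow> 'f P1" where
  "P1_inverse Infty = Fin 0"
| "P1_inverse (Fin t) = (if t = 0 then Infty else Fin (inverse t))"

fun P1_add_const :: "'f::field \<Rightarrow> 'f P1 \<Rightarrow> 'f P1" where
  "P1_add_const a Infty = Infty"
| "P1_add_const a (Fin t) = Fin (a + t)"

fun cont_frac :: "'a::idom list \<Rightarrow> 'a fract P1" where
  "cont_frac [] = Infty"
| "cont_frac [a] = Fin (to_fract a)"
| "cont_frac (a # as) = P1_add_const (to_fract a) (P1_inverse (cont_frac as))"

end

theory Submission
  imports Defs
begin


definition rmul :: "'a::comm_ring_1 \<times> 'a \<Rightarrow> 'a m2 \<Rightarrow> 'a \<times> 'a" where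
  "rmul r M = (case r of (x,y) \<Rightarrow> case M of (a,b,c,d) \<Rightarrow> (x*a + y*c, x*b + y*d))"

definition smul :: "'a::comm_ring_1 \<Rightarrow> 'a \<times> 'a \<Rightarrow> 'a \<times> 'a" where
  "smul w r = (w * fst r, w * snd r)"

definition rowS :: "'a::comm_ring_1 list \<Rightarrow> 'a \<times> 'a" where
  "rowS as = rmul (1,0) (S_prod as)"

lemma m2_mult_assoc: "m2_mult (m2_mult M N) P = m2_mult M (m2_mult N P)"
  by (cases M; cases N; cases P) (simp add: m2_mult_def algebra_simps)

lemma m2_mult_one_right[simp]: "m2_mult M m2_one = M"
  by (cases M) (simp add: m2_mult_def m2_one_def)

lemma m2_mult_one_left[simp]: "m2_mult m2_one M = M"
  by (cases M) (simp add: m2_mult_def m2_one_def)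

lemma rmul_rmul: "rmul (rmul r M) N = rmul r (m2_mult M N)"
  by (cases r; cases M; cases N) (simp add: rmul_def m2_mult_def algebra_simps)

lemma rmul_one[simp]: "rmul r m2_one = r"
  by (cases r) (simp add: rmul_def m2_one_def)

lemma rmul_smul: "rmul (smul w r) M = smul w (rmul r M)"
  by (cases r; cases M) (simp add: rmul_def smul_def algebra_simps)

lemma smul_smul: "smul u (smul w r) = smul (u*w) r"
  by (simp add: smul_def)

lemma det_mult: "m2_det (m2_mult M N) = m2_det M * m2_det N"
  by (cases M; cases N) (simp add: m2_mult_def m2_det_def algebra_simps)

lemma foldl_S: "foldl (\<lambda>M a. m2_mult (S a) M) M as = m2_mult (S_prod as) M"
proof (induction as arbitrary: M)
  case Nil then show ?case by (simp add: S_prod_def)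
next
  case (Cons a as)
  have "foldl (\<lambda>M a. m2_mult (S a) M) M (a#as) = m2_mult (S_prod as) (m2_mult (S a) M)"
    using Cons by simp
  moreover have "S_prod (a#as) = m2_mult (S_prod as) (S a)"
    unfolding S_prod_def using Cons[of "m2_mult (S a) m2_one"] by (simp add: S_prod_def)
  ultimately show ?case by (simp add: m2_mult_assoc)
qed

lemma S_prod_Cons: "S_prod (a#as) = m2_mult (S_prod as) (S a)"
  using foldl_S[of "m2_mult (S a) m2_one" as] by (simp add: S_prod_def)

lemma S_prod_Nil[simp]: "S_prod [] = m2_one"
  by (simp add: S_prod_def)

lemma S_prod_snoc: "S_prod (as@[a]) = m2_mult (S a) (S_prod as)"
  by (simp add: S_prod_def)

lemma S00: "m2_mult (S 0) (S (0::'a::comm_ring_1)) = m2_one"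
  by (simp add: S_def m2_mult_def m2_one_def)

lemma S_prod_pad: "S_prod (as@[0,0]) = S_prod as"
proof -
  have "S_prod (as@[0,0]) = S_prod ((as@[0])@[0])" by simp
  also have "\<dots> = m2_mult (S 0) (m2_mult (S 0) (S_prod as))" by (simp only: S_prod_snoc)
  also have "\<dots> = S_prod as" by (simp add: m2_mult_assoc[symmetric] S00)
  finally show ?thesis .
qed

lemma rowS_pad: "rowS (as@[0,0]) = rowS as"
  by (simp add: rowS_def S_prod_pad)

lemma rowS_Nil[simp]: "rowS [] = (1,0)"
  by (simp add: rowS_def rmul_def m2_one_def)

lemma rowS_Cons: "rowS (a#as) = rmul (rowS as) (S a)"
  by (simp add: rowS_def S_prod_Cons rmul_rmul)

lemma rowS_Cons': "rowS (a#as) = (fst (rowS as) * a + snd (rowS as), fst (rowS as))"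
  by (cases "rowS as") (simp add: rowS_Cons rmul_def S_def)

lemma rowS_snoc: "rowS (as@[t]) = rmul (t,1) (S_prod as)"
  by (simp add: rowS_def S_prod_snoc rmul_rmul[symmetric]) (simp add: rmul_def S_def)

lemma rowS_fst: "S_prod as = (p0,q0,p1,q1) \<Longrightarrow> rowS as = (p0,q0)"
  by (simp add: rowS_def rmul_def)

lemma det_S_prod: "m2_det (S_prod as) = 1 \<or> m2_det (S_prod (as::'a::comm_ring_1 list)) = -1"
proof (induction as)
  case Nil then show ?case by (simp add: m2_det_def m2_one_def)
next
  case (Cons a as)
  have "m2_det (S a) = -1" by (simp add: m2_det_def S_def)
  then show ?case using Cons by (auto simp: S_prod_Cons det_mult)
qed

lemma det_S_prod_unit: "m2_det (S_prod as) dvd 1"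
  using det_S_prod[of as] by auto

lemma unimodular_rowS: "unimodular (rowS as)"
proof -
  obtain p0 q0 p1 q1 where P: "S_prod as = (p0,q0,p1,q1)" by (cases "S_prod as") auto
  from det_S_prod_unit[of as] P obtain e where e: "1 = (p0*q1 - q0*p1) * e"
    by (auto simp: m2_det_def elim!: dvdE)
  have "(q1*e)*p0 + (-p1*e)*q0 = 1" using e by (simp add: algebra_simps)
  then have "\<exists>x y. x*p0 + y*q0 = 1" by blast
  then show ?thesis using rowS_fst[OF P] by (simp add: unimodular_def)
qed



abbreviation tf where "tf \<equiv> to_fract"

lemma hom_pt_eq_cross:
  assumes "hom_pt (tf a) (tf b) = hom_pt (tf p) (tf (q::'a::idom))"
  shows "a*q = b*p"
proof (cases "b = 0")
  case True
  then have "q = 0" using assms by (auto simp: hom_pt_def split: if_splits)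
  then show ?thesis using True by simp
next
  case False
  then have q: "q \<noteq> 0" and e: "tf a / tf b = tf p / tf q" using assms by (auto simp: hom_pt_def split: if_splits)
  then have "tf a * tf q = tf p * tf b" using False by (simp add: field_simps)
  then have "tf (a*q) = tf (b*p)" by (simp add: mult.commute)
  then show ?thesis by (simp only: to_fract_eq_iff)
qed

lemma hom_pt_scale:
  assumes "(w::'a::idom) \<noteq> 0"
  shows "hom_pt (tf (w*a)) (tf (w*b)) = hom_pt (tf a) (tf b)"
  using assms by (simp add: hom_pt_def)

lemma unit_prop:
  fixes a b p q :: "'a::idom"
  assumes "unimodular (a,b)" "unimodular (p,q)" "a*q = b*p"
  shows "\<exists>w. w dvd 1 \<and> a = w*p \<and> b = w*q"
proof -
  obtain x y where xy: "x*a + y*b = 1" using assms(1) by (auto simp: unimodular_def)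
  obtain x' y' where xy': "x'*p + y'*q = 1" using assms(2) by (auto simp: unimodular_def)
  define l where "l = x'*a + y'*b"
  define m where "m = x*p + y*q"
  have "l*p = x'*a*p + y'*(b*p)" by (simp add: l_def algebra_simps)
  also have "\<dots> = a*(x'*p + y'*q)" using assms(3) by (simp add: algebra_simps)
  finally have lp: "a = l*p" using xy' by simp
  have "l*q = x'*(a*q) + y'*b*q" by (simp add: l_def algebra_simps)
  also have "\<dots> = b*(x'*p + y'*q)" using assms(3) by (simp add: algebra_simps)
  finally have lq: "b = l*q" using xy' by simp
  have "m*a = x*p*a + y*(a*q)" by (simp add: m_def algebra_simps)
  also have "\<dots> = p*(x*a+y*b)" using assms(3) by (simp add: algebra_simps)
  finally have ma: "p = m*a" using xy by simp
  have "m*b = x*(b*p) + y*q*b" by (simp add: m_def algebra_simps)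
  also have "\<dots> = q*(x*a+y*b)" using assms(3) by (simp add: algebra_simps)
  finally have mb: "q = m*b" using xy by simp
  have "1 = x'*(m*a) + y'*(m*b)" using xy' ma mb by simp
  also have "\<dots> = m*l" by (simp add: l_def algebra_simps)
  finally have "l dvd 1" by (metis dvd_triv_right)
  then show ?thesis using lp lq by blast
qed

lemma unimod_nz: "unimodular ((a::'a::idom),b) \<Longrightarrow> (a,b) \<noteq> (0,0)"
  by (auto simp: unimodular_def)

lemma unimod_bezout: "unimodular ((a::'a::idom),b) \<Longrightarrow> bezout_pair a b"
  unfolding bezout_pair_def
proof (intro conjI)
  assume u: "unimodular (a,b)"
  then show "(a,b) \<noteq> (0,0)" by (rule unimod_nz)
  obtain x y where xy: "x*a + y*b = 1" using u by (auto simp: unimodular_def)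
  have "{x*a + y*b |x y. True} = {1*z |z. True}"
  proof (intro set_eqI iffI)
    fix z :: 'a assume "z \<in> {1*z |z. True}"
    have "z = z*(x*a+y*b)" using xy by simp
    then have "z = (z*x)*a + (z*y)*b" by (simp add: algebra_simps)
    then show "z \<in> {x*a + y*b |x y. True}" by blast
  qed auto
  then show "\<exists>d. {x*a + y*b |x y. True} = {d*z |z. True}" by blast
qed

lemma bezout_decomp:
  assumes "bezout_pair (a::'a::idom) b"
  shows "\<exists>d a' b'. d \<noteq> 0 \<and> a = d*a' \<and> b = d*b' \<and> unimodular (a',b')"
proof -
  obtain d where nz: "(a,b) \<noteq> (0,0)" and eq: "{x*a + y*b |x y. True} = {d*z |z. True}"
    using assms by (auto simp: bezout_pair_def)
  have "a \<in> {x*a + y*b |x y. True}" by (rule CollectI, rule exI[of _ 1], rule exI[of _ 0]) simp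
  then have "a \<in> {d*z |z. True}" by (simp only: eq)
  then obtain a' where a': "a = d*a'" by blast
  have "b \<in> {x*a + y*b |x y. True}" by (rule CollectI, rule exI[of _ 0], rule exI[of _ 1]) simp
  then have "b \<in> {d*z |z. True}" by (simp only: eq)
  then obtain b' where b': "b = d*b'" by blast
  have "d \<in> {d*z |z. True}" by (rule CollectI, rule exI[of _ 1]) simp
  then have "d \<in> {x*a + y*b |x y. True}" by (simp only: eq)
  then obtain x y where d: "d = x*a + y*b" by blast
  have d0: "d \<noteq> 0" using nz a' b' by auto
  have "d*1 = d*(x*a' + y*b')" using d a' b' by (simp add: algebra_simps)
  then have "x*a' + y*b' = 1" using d0 by (metis mult_left_cancel)
  then have "unimodular (a',b')" by (auto simp: unimodular_def)
  then show ?thesis using d0 a' b' by blast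
qed

lemma act_Infty_S_prod: "act Infty (S_prod as) = hom_pt (tf (fst (rowS as))) (tf (snd (rowS as)))"
  by (cases "S_prod as") (simp add: act_def rowS_fst)

lemma cont_frac_rowS:
  "as \<noteq> [] \<Longrightarrow> cont_frac as = hom_pt (tf (fst (rowS as))) (tf (snd (rowS (as::'a::idom list))))"
proof (induction as rule: cont_frac.induct)
  case 1 then show ?case by simp
next
  case (2 a) then show ?case by (simp add: rowS_Cons' hom_pt_def)
next
  case (3 a b bs)
  define p where "p = fst (rowS (b#bs))"
  define q where "q = snd (rowS (b#bs))"
  have IH: "cont_frac (b#bs) = hom_pt (tf p) (tf q)" using 3 by (simp add: p_def q_def)
  have nz: "(p,q) \<noteq> (0,0)" using unimod_nz[of p q] unimodular_rowS[of "b#bs"] by (simp add: p_def q_def)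
  have r: "rowS (a#b#bs) = (p*a + q, p)" by (simp only: rowS_Cons'[of a] p_def q_def)
  show ?case
  proof (cases "q = 0")
    case True
    then have "p \<noteq> 0" using nz by simp
    then show ?thesis using True IH r by (simp add: hom_pt_def)
  next
    case False
    show ?thesis
    proof (cases "p = 0")
      case True then show ?thesis using False IH r by (simp add: hom_pt_def)
    next
      case p: False
      have tp: "tf p \<noteq> 0" using p by simp
      have tq: "tf q \<noteq> 0" using False by simp
      have e: "tf a + tf q / tf p = (tf p * tf a + tf q) / tf p" using tp by (simp add: field_simps)
      have "cont_frac (a#b#bs) = Fin (tf a + inverse (tf p / tf q))"
        using IH tp tq by (simp add: hom_pt_def)
      also have "\<dots> = Fin ((tf p * tf a + tf q) / tf p)" using e by (simp add: inverse_divide)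
      also have "\<dots> = hom_pt (tf (fst (rowS (a#b#bs)))) (tf (snd (rowS (a#b#bs))))"
        using r tp by (simp add: hom_pt_def)
      finally show ?thesis .
    qed
  qed
qed

lemma weak_euclid_from_rowS:
  "as \<noteq> [] \<Longrightarrow> weak_euclid (d * fst (rowS as)) (d * snd (rowS (as::'a::comm_ring_1 list)))"
proof (induction as arbitrary: d)
  case Nil then show ?case by simp
next
  case (Cons a as)
  show ?case
  proof (cases "as = []")
    case True
    have "rowS [a] = (a, 1)" by (simp add: rowS_Cons')
    then show ?thesis using True unfolding weak_euclid_def
      by (intro exI[of _ 0] exI[of _ "\<lambda>_. a"] exI[of _ "\<lambda>k. if k = 0 then d*a else if k = 1 then d else 0"])
         (simp add: algebra_simps)
  next
    case False
    define p where "p = fst (rowS as)"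
    define p' where "p' = snd (rowS as)"
    have r: "rowS (a#as) = (p*a + p', p)" by (simp only: rowS_Cons'[of a] p_def p'_def)
    from Cons.IH[OF False, of d] obtain n :: nat and q r where
      h: "r 0 = d*p" "r 1 = d*p'" "r (n+2) = 0" "\<forall>k\<le>n. r k = q k * r (k+1) + r (k+2)"
      unfolding weak_euclid_def p_def p'_def by blast
    define q' where "q' = (\<lambda>k. case k of 0 \<Rightarrow> a | Suc k \<Rightarrow> q k)"
    define r' where "r' = (\<lambda>k. case k of 0 \<Rightarrow> d*(p*a+p') | Suc k \<Rightarrow> r k)"
    have "\<forall>k\<le>Suc n. r' k = q' k * r' (k+1) + r' (k+2)"
    proof (intro allI impI)
      fix k assume k: "k \<le> Suc n"
      show "r' k = q' k * r' (k+1) + r' (k+2)"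
      proof (cases k)
        case 0 then show ?thesis using h by (simp add: q'_def r'_def algebra_simps)
      next
        case (Suc j) then show ?thesis using h k by (simp add: q'_def r'_def)
      qed
    qed
    moreover have "r' 0 = d*fst (rowS (a#as))" "r' 1 = d * snd (rowS (a#as))" "r' (Suc n + 2) = 0"
      using h r by (simp_all add: r'_def)
    ultimately show ?thesis unfolding weak_euclid_def by blast
  qed
qed

lemma rowS_from_weak_euclid_aux:
  "r 0 = a \<Longrightarrow> r 1 = b \<Longrightarrow> r ((n::nat)+2) = 0 \<Longrightarrow> (\<forall>k\<le>n. r k = q k * r (k+1) + r (k+2)) \<Longrightarrow>
   \<exists>d as. a = d * fst (rowS as) \<and> b = d * snd (rowS (as::'a::comm_ring_1 list))"
proof (induction n arbitrary: a b q r)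
  case 0
  then have "a = q 0 * b" by auto
  moreover have "rowS [q 0] = (q 0, 1)" by (simp add: rowS_Cons')
  ultimately show ?case by (intro exI[of _ b] exI[of _ "[q 0]"]) (simp add: algebra_simps)
next
  case (Suc n)
  have "\<exists>d as. b = d * fst (rowS as) \<and> r 2 = d * snd (rowS as)"
    apply (rule Suc.IH[of "r \<circ> Suc" b "r 2" "q \<circ> Suc"])
    using Suc.prems by (auto simp: numeral_2_eq_2)
  then obtain d as where h: "b = d * fst (rowS as)" "r 2 = d * snd (rowS as)" by blast
  have "a = q 0 * b + r 2" using Suc.prems by (auto simp: numeral_2_eq_2)
  then have "a = d * fst (rowS (q 0 # as)) \<and> b = d * snd (rowS (q 0 # as))"
    using h by (simp add: rowS_Cons' algebra_simps)
  then show ?case by blast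
qed

lemma rowS_from_weak_euclid:
  "weak_euclid a b \<Longrightarrow> \<exists>d as. a = d * fst (rowS as) \<and> b = d * snd (rowS (as::'a::comm_ring_1 list))"
  unfolding weak_euclid_def using rowS_from_weak_euclid_aux by blast



definition Rset :: "('a::comm_ring_1 \<times> 'a) set" where
  "Rset = {smul w (rowS as) | w as. w dvd 1}"

lemma R_rowS: "rowS as \<in> Rset"
  unfolding Rset_def by (rule CollectI, rule exI[of _ 1], rule exI[of _ as]) (simp add: smul_def)

lemma RI: "w dvd 1 \<Longrightarrow> smul w (rowS as) \<in> Rset"
  unfolding Rset_def by blast

lemma umult: "(u::'a::comm_ring_1) dvd 1 \<Longrightarrow> v dvd 1 \<Longrightarrow> u*v dvd 1"
  using mult_dvd_mono[of u 1 v 1] by simp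

lemma R_smul: "r \<in> Rset \<Longrightarrow> u dvd 1 \<Longrightarrow> smul u r \<in> Rset"
proof -
  assume "r \<in> Rset" "u dvd 1"
  then obtain w as where "w dvd 1" "r = smul w (rowS as)" unfolding Rset_def by blast
  then show ?thesis using RI[OF umult[OF \<open>u dvd 1\<close> \<open>w dvd 1\<close>], of as] by (simp add: smul_smul)
qed

lemma R_S: "r \<in> Rset \<Longrightarrow> rmul r (S a) \<in> Rset"
proof -
  assume "r \<in> Rset"
  then obtain w as where "w dvd 1" "r = smul w (rowS as)" unfolding Rset_def by blast
  then show ?thesis using RI[OF \<open>w dvd 1\<close>, of "a#as"] by (simp add: rmul_smul rowS_Cons)
qed

lemma rowS_diag: "u dvd 1 \<Longrightarrow> v dvd 1 \<Longrightarrow>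
   \<exists>w as'. w dvd 1 \<and> rmul (rowS as) (u,0,0,v) = smul w (rowS (as'::'a::comm_ring_1 list))"
proof (induction as arbitrary: u v)
  case Nil
  then show ?case by (intro exI[of _ u] exI[of _ "[]"]) (simp add: rmul_def smul_def)
next
  case (Cons a as)
  from Cons.prems(2) obtain vi where vi: "1 = v * vi" by (auto elim!: dvdE)
  have "m2_mult (S a) (u,0,0,v) = m2_mult (v,0,0,u) (S (a*u*vi))"
    using vi by (simp add: m2_mult_def S_def algebra_simps)
  then have "rmul (rowS (a#as)) (u,0,0,v) = rmul (rmul (rowS as) (v,0,0,u)) (S (a*u*vi))"
    by (simp add: rowS_Cons rmul_rmul)
  moreover obtain w as' where "w dvd 1" "rmul (rowS as) (v,0,0,u) = smul w (rowS as')"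
    using Cons.IH[of v u] Cons.prems by blast
  ultimately show ?case by (auto simp: rmul_smul rowS_Cons[symmetric])
qed

lemma R_diag: "r \<in> Rset \<Longrightarrow> u dvd 1 \<Longrightarrow> v dvd 1 \<Longrightarrow> rmul r (u,0,0,v) \<in> Rset"
proof -
  assume "r \<in> Rset" "u dvd 1" "v dvd 1"
  then obtain w as where w: "w dvd 1" "r = smul w (rowS as)" unfolding Rset_def by blast
  from rowS_diag[OF \<open>u dvd 1\<close> \<open>v dvd 1\<close>, of as]
  obtain w' as' where "w' dvd 1" "rmul (rowS as) (u,0,0,v) = smul w' (rowS as')"
    by blast
  then show ?thesis using w RI[OF umult[OF w(1) \<open>w' dvd 1\<close>], of as'] by (simp add: rmul_smul smul_smul)
qed

lemma E12_S: "(1,t,0,1) = m2_mult (S t) (S (0::'a::comm_ring_1))"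
  by (simp add: m2_mult_def S_def)
lemma E21_S: "(1,0,t,1) = m2_mult (S 0) (S (t::'a::comm_ring_1))"
  by (simp add: m2_mult_def S_def)

lemma gen_fwd: "g \<in> elem_or_diag \<Longrightarrow> r \<in> Rset \<Longrightarrow> rmul r g \<in> Rset"
  unfolding elem_or_diag_def
  by (auto simp: E12_S E21_S rmul_rmul[symmetric] intro!: R_S R_diag)

lemma gen_inv: "g \<in> (elem_or_diag :: 'a::comm_ring_1 m2 set) \<Longrightarrow> \<exists>g'\<in>elem_or_diag. m2_mult g g' = m2_one"
proof -
  assume "g \<in> elem_or_diag"
  then consider t where "g = (1,t,0,1)" | t where "g = (1,0,t,1)" | u v where "g = (u,0,0,v)" "u dvd 1" "v dvd 1"
    unfolding elem_or_diag_def by blast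
  then show ?thesis
  proof cases
    case (1 t) then show ?thesis
      by (intro bexI[of _ "(1,-t,0,1)"]) (auto simp: m2_mult_def m2_one_def elem_or_diag_def)
  next
    case (2 t) then show ?thesis
      by (intro bexI[of _ "(1,0,-t,1)"]) (auto simp: m2_mult_def m2_one_def elem_or_diag_def)
  next
    case (3 u v)
    obtain ui where ui: "1 = u*ui" using 3 by (auto elim!: dvdE)
    obtain vi where vi: "1 = v*vi" using 3 by (auto elim!: dvdE)
    have "(ui,0,0,vi) \<in> elem_or_diag" unfolding elem_or_diag_def using ui vi
      by (auto intro: dvdI[of _ _ u] dvdI[of _ _ v] simp: mult.commute)
    then show ?thesis using 3 ui vi
      by (intro bexI[of _ "(ui,0,0,vi)"]) (auto simp: m2_mult_def m2_one_def)
  qed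
qed

lemma gen_Q: "g \<in> elem_or_diag \<Longrightarrow> (r \<in> Rset \<longleftrightarrow> rmul r g \<in> Rset)"
proof
  assume g: "g \<in> elem_or_diag"
  show "r \<in> Rset \<Longrightarrow> rmul r g \<in> Rset" using gen_fwd[OF g] .
  obtain g' where g': "g' \<in> elem_or_diag" "m2_mult g g' = m2_one" using gen_inv[OF g] by blast
  assume "rmul r g \<in> Rset"
  then have "rmul (rmul r g) g' \<in> Rset" using gen_fwd[OF g'(1)] by blast
  then show "r \<in> Rset" using g'(2) by (simp add: rmul_rmul)
qed

lemma gen_subgroup_Q: "M \<in> gen_subgroup elem_or_diag \<Longrightarrow> (\<forall>r. r \<in> Rset \<longleftrightarrow> rmul r M \<in> Rset)"
proof (induction rule: gen_subgroup.induct)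
  case one then show ?case by simp
next
  case (gen g) then show ?case using gen_Q by blast
next
  case (mult M N)
  show ?case
  proof
    fix r
    have "r \<in> Rset \<longleftrightarrow> rmul r M \<in> Rset" using mult.IH(1) by blast
    also have "\<dots> \<longleftrightarrow> rmul (rmul r M) N \<in> Rset" using mult.IH(2) by blast
    finally show "r \<in> Rset \<longleftrightarrow> rmul r (m2_mult M N) \<in> Rset" by (simp add: rmul_rmul)
  qed
next
  case (inv M N)
  show ?case
  proof
    fix r
    have "rmul r N \<in> Rset \<longleftrightarrow> rmul (rmul r N) M \<in> Rset" using inv.IH by blast
    also have "\<dots> \<longleftrightarrow> r \<in> Rset" using inv.hyps(2) by (simp add: rmul_rmul)
    finally show "r \<in> Rset \<longleftrightarrow> rmul r N \<in> Rset" by simp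
  qed
qed

definition CR :: "'a::comm_ring_1 itself \<Rightarrow> bool" where
  "CR _ \<longleftrightarrow> (\<forall>a b::'a. unimodular (a,b) \<longrightarrow> (a,b) \<in> Rset)"

lemma C4_CR: "GE2_ring TYPE('a::comm_ring_1) \<Longrightarrow> CR TYPE('a)"
  unfolding CR_def
proof (intro allI impI)
  fix a b :: 'a
  assume ge: "GE2_ring TYPE('a)" and u: "unimodular (a,b)"
  obtain x y where xy: "x*a + y*b = 1" using u by (auto simp: unimodular_def)
  have "m2_det (a,b,-y,x) = 1" using xy by (simp add: m2_det_def algebra_simps)
  then have "(a,b,-y,x) \<in> GL2" by (simp add: GL2_def)
  then have "(a,b,-y,x) \<in> gen_subgroup elem_or_diag" using ge by (simp add: GE2_ring_def)
  from gen_subgroup_Q[OF this, rule_format, of "(1,0)"] have "rmul (1,0) (a,b,-y,x) \<in> Rset"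
    using R_rowS[of "[]"] by simp blast
  then show "(a,b) \<in> Rset" by (simp add: rmul_def)
qed

lemma gen_GL2: "M \<in> gen_subgroup (elem_or_diag::'a::comm_ring_1 m2 set) \<Longrightarrow> M \<in> GL2"
proof (induction rule: gen_subgroup.induct)
  case one then show ?case by (simp add: GL2_def m2_det_def m2_one_def)
next
  case (gen g) then show ?case
    by (auto simp: GL2_def elem_or_diag_def m2_det_def intro!: umult)
next
  case (mult M N) then show ?case by (auto simp: GL2_def det_mult intro: umult)
next
  case (inv M N)
  have "m2_det N * m2_det M = 1" using inv.hyps(2) det_mult[of N M]
    by (simp add: m2_det_def m2_one_def)
  then show ?case by (simp add: GL2_def) (metis dvd_triv_left)
qed

lemma S0_gen: "S 0 \<in> gen_subgroup (elem_or_diag::'a::comm_ring_1 m2 set)"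
proof -
  have g: "(1,1,0,1) \<in> gen_subgroup (elem_or_diag::'a m2 set)" "(1,0,-1,1) \<in> gen_subgroup (elem_or_diag::'a m2 set)"
     "(-1,0,0,1) \<in> gen_subgroup (elem_or_diag::'a m2 set)"
    by (auto intro!: gen_subgroup.gen simp: elem_or_diag_def)
  have "S (0::'a) = m2_mult (m2_mult (m2_mult (1,1,0,1) (1,0,-1,1)) (1,1,0,1)) (-1,0,0,1)"
    by (simp add: S_def m2_mult_def)
  then show ?thesis using g gen_subgroup.mult by metis
qed

lemma S_gen: "S a \<in> gen_subgroup (elem_or_diag::'a::comm_ring_1 m2 set)"
proof -
  have "(1,a,0,1) \<in> gen_subgroup (elem_or_diag::'a m2 set)"
    by (auto intro!: gen_subgroup.gen simp: elem_or_diag_def)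
  moreover have "S a = m2_mult (1,a,0,1) (S 0)" by (simp add: S_def m2_mult_def)
  ultimately show ?thesis using S0_gen gen_subgroup.mult by metis
qed

lemma S_prod_gen: "S_prod as \<in> gen_subgroup (elem_or_diag::'a::comm_ring_1 m2 set)"
  by (induction as) (auto simp: S_prod_Cons intro: gen_subgroup.one gen_subgroup.mult S_gen)

lemma CR_C4: "CR TYPE('a::comm_ring_1) \<Longrightarrow> GE2_ring TYPE('a)"
  unfolding GE2_ring_def
proof (intro set_eqI iffI)
  fix M :: "'a m2"
  assume "M \<in> gen_subgroup elem_or_diag" then show "M \<in> GL2" by (rule gen_GL2)
next
  fix M :: "'a m2"
  assume cr: "CR TYPE('a)" and M: "M \<in> GL2"
  obtain a b c d where Md: "M = (a,b,c,d)" by (cases M) auto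
  obtain ei where ei: "1 = (a*d - b*c) * ei" using M Md by (auto simp: GL2_def m2_det_def elim!: dvdE)
  have "(d*ei)*a + (-c*ei)*b = 1" using ei by (simp add: algebra_simps)
  then have "unimodular (a,b)" unfolding unimodular_def by blast
  then have "(a,b) \<in> Rset" using cr by (simp add: CR_def)
  then obtain w as where w: "w dvd 1" "(a,b) = smul w (rowS as)" by (auto simp: Rset_def)
  define P where "P = m2_mult (w,0,0,1) (S_prod as)"
  have "(w,0,0,1) \<in> (elem_or_diag :: 'a m2 set)" using w(1) by (auto simp: elem_or_diag_def)
  then have Pg: "P \<in> gen_subgroup elem_or_diag" unfolding P_def
    by (intro gen_subgroup.mult gen_subgroup.gen S_prod_gen)
  obtain p0 q0 p3 p4 where SP: "S_prod as = (p0,q0,p3,p4)" by (cases "S_prod as") auto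
  obtain pa pb where P: "P = (pa,pb,p3*1,p4*1)" using SP by (simp add: P_def m2_mult_def)
  have "pa = a" "pb = b" using P SP w(2) rowS_fst[OF SP] by (auto simp: P_def m2_mult_def smul_def)
  then have P: "P = (a,b,p3,p4)" using P by simp
  have "m2_det P dvd 1" using gen_GL2[OF Pg] by (simp add: GL2_def)
  then obtain di where di: "1 = (a*p4 - b*p3) * di" using P by (auto simp: m2_det_def elim!: dvdE)
  define c' where "c' = (c*p4 - d*p3)*di"
  define d' where "d' = (a*d - b*c)*di"
  have u1: "(a*d - b*c) dvd 1" using ei by (rule dvdI)
  have u2: "di dvd 1" using di by (metis dvdI mult.commute)
  have d'u: "d' dvd 1" unfolding d'_def using u1 u2 by (rule umult)
  have e1: "c'*a + d'*p3 = c" 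
  proof -
    have "c'*a + d'*p3 = c*((a*p4 - b*p3) * di)" by (simp add: c'_def d'_def algebra_simps)
    then show ?thesis using di by simp
  qed
  have e2: "c'*b + d'*p4 = d" 
  proof -
    have "c'*b + d'*p4 = d*((a*p4 - b*p3) * di)" by (simp add: c'_def d'_def algebra_simps)
    then show ?thesis using di by simp
  qed
  have "M = m2_mult (m2_mult (1,0,c',1) (1,0,0,d')) P"
    using Md P e1 e2 by (simp add: m2_mult_def)
  moreover have "(1,0,c',1) \<in> gen_subgroup elem_or_diag" "(1,0,0,d') \<in> gen_subgroup elem_or_diag"
    using d'u by (auto intro!: gen_subgroup.gen simp: elem_or_diag_def)
  ultimately show "M \<in> gen_subgroup elem_or_diag" using Pg by (metis gen_subgroup.mult)
qed



lemma unit_equiv_iff: "((x,y) \<in> unit_equiv) \<longleftrightarrow> unimodular x \<and> unimodular y \<and>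
   (\<exists>u. u dvd 1 \<and> y = smul u x)"
  by (cases x; cases y) (auto simp: unit_equiv_def smul_def)

lemma equiv_ue: "equiv unimod_rows (unit_equiv :: (('a::comm_ring_1 \<times> 'a) \<times> _) set)"
proof (rule equivI)
  show "(unit_equiv :: (('a \<times> 'a) \<times> _) set) \<subseteq> unimod_rows \<times> unimod_rows"
    by (auto simp: unit_equiv_iff unimod_rows_def)
  show "refl_on unimod_rows (unit_equiv :: (('a \<times> 'a) \<times> _) set)"
  proof (rule refl_onI)
    fix x :: "'a \<times> 'a" assume "x \<in> unimod_rows"
    then show "(x,x) \<in> unit_equiv"
      by (auto simp: unit_equiv_iff unimod_rows_def smul_def intro!: exI[of _ 1])
  qed
  show "sym (unit_equiv :: (('a \<times> 'a) \<times> _) set)"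
  proof (rule symI)
    fix x y :: "'a \<times> 'a" assume "(x,y) \<in> unit_equiv"
    then obtain u where h: "unimodular x" "unimodular y" "u dvd 1" "y = smul u x"
      by (auto simp: unit_equiv_iff)
    obtain ui where ui: "1 = u*ui" using h(3) by (auto elim!: dvdE)
    have "ui dvd 1" using ui by (metis dvdI mult.commute)
    moreover have "x = smul ui y" using h(4) ui
      by (cases x) (simp add: smul_def algebra_simps flip: mult.assoc)
    ultimately show "(y,x) \<in> unit_equiv" using h by (auto simp: unit_equiv_iff)
  qed
  show "trans (unit_equiv :: (('a \<times> 'a) \<times> _) set)"
  proof (rule transI)
    fix x y z :: "'a \<times> 'a" assume "(x,y) \<in> unit_equiv" "(y,z) \<in> unit_equiv"
    then obtain u v where h: "unimodular x" "unimodular z" "u dvd 1" "y = smul u x" "v dvd 1" "z = smul v y"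
      by (auto simp: unit_equiv_iff)
    then show "(x,z) \<in> unit_equiv" by (auto simp: unit_equiv_iff smul_smul intro!: umult)
  qed
qed

abbreviation cls where "cls z \<equiv> unit_equiv `` {z}"

lemma cls_vertex: "unimodular z \<Longrightarrow> cls z \<in> Gamma_vertices T"
  by (auto simp: Gamma_vertices_def unimod_rows_def intro!: quotientI)

lemma in_cls: "unimodular z \<Longrightarrow> z \<in> cls z"
  using equiv_class_self[OF equiv_ue, of z] by (auto simp: unimod_rows_def)

lemma edgeI: "unimodular (a,b) \<Longrightarrow> unimodular (c,d) \<Longrightarrow> (a,b,c,d) \<in> GL2 \<Longrightarrow>
   (cls (a,b), cls (c,d)) \<in> Gamma_edges (T::'a::comm_ring_1 itself)"
  unfolding Gamma_edges_def using cls_vertex in_cls by blast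

lemma path_rowS: "(cls (1,0), cls (rowS as)) \<in> (Gamma_edges (T::'a::comm_ring_1 itself))\<^sup>*"
proof (induction as rule: rev_induct)
  case Nil then show ?case by simp
next
  case (snoc t as)
  obtain p0 q0 p1 q1 where SP: "S_prod as = (p0,q0,p1,q1)" by (cases "S_prod as") auto
  have r1: "rowS as = (p0,q0)" by (rule rowS_fst[OF SP])
  have r2: "rowS (as@[t]) = (t*p0 + p1, t*q0 + q1)" by (simp add: rowS_snoc SP rmul_def)
  have "m2_det (p0,q0,t*p0 + p1, t*q0 + q1) = m2_det (S_prod as)"
    by (simp add: SP m2_det_def algebra_simps)
  then have "(p0,q0,t*p0 + p1, t*q0 + q1) \<in> GL2" using det_S_prod_unit[of as] by (simp add: GL2_def)
  then have "(cls (rowS as), cls (rowS (as@[t]))) \<in> Gamma_edges T"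
    using edgeI unimodular_rowS r1 r2 by metis
  then show ?case using snoc by simp
qed

lemma edges_sym: "sym (Gamma_edges (T::'a::comm_ring_1 itself))"
proof (rule symI)
  fix X Y assume "(X,Y) \<in> Gamma_edges T"
  then obtain a b c d where h: "X \<in> Gamma_vertices T" "Y \<in> Gamma_vertices T" "(a,b) \<in> X" "(c,d) \<in> Y"
    "(a,b,c,d) \<in> GL2" unfolding Gamma_edges_def by blast
  have "m2_det (c,d,a,b) = - m2_det (a,b,c,d)" by (simp add: m2_det_def)
  then have "(c,d,a,b) \<in> GL2" using h(5) by (simp add: GL2_def)
  then show "(Y,X) \<in> Gamma_edges T" using h unfolding Gamma_edges_def by blast
qed

lemma R_cls: "unimodular z \<Longrightarrow> z \<in> Rset \<Longrightarrow> (cls (1,0), cls z) \<in> (Gamma_edges (T::'a::comm_ring_1 itself))\<^sup>*"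
proof -
  assume u: "unimodular z" and "z \<in> Rset"
  then obtain w as where w: "w dvd 1" "z = smul w (rowS as)" unfolding Rset_def by blast
  have "(rowS as, z) \<in> unit_equiv" using w u unimodular_rowS by (auto simp: unit_equiv_iff)
  then have "cls (rowS as) = cls z" using equiv_class_eq[OF equiv_ue] by blast
  then show ?thesis using path_rowS[of as] by simp
qed

lemma CR_C1: "CR TYPE('a::comm_ring_1) \<Longrightarrow> Gamma_path_connected (T::'a itself)"
  unfolding Gamma_path_connected_def
proof (intro ballI)
  assume cr: "CR TYPE('a)"
  have P: "(cls (1,0), X) \<in> (Gamma_edges T)\<^sup>*" if "X \<in> Gamma_vertices T" for X
  proof -
    from that obtain x where x: "X = cls x" "x \<in> unimod_rows"
      unfolding Gamma_vertices_def by (auto elim!: quotientE)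
    then have "unimodular x" by (simp add: unimod_rows_def)
    moreover have "x \<in> Rset" using cr \<open>unimodular x\<close> by (cases x) (auto simp: CR_def)
    ultimately show ?thesis using R_cls x(1) by blast
  qed
  fix X Y assume "X \<in> Gamma_vertices T" "Y \<in> Gamma_vertices T"
  then have "(cls (1,0), X) \<in> (Gamma_edges T)\<^sup>*" "(cls (1,0), Y) \<in> (Gamma_edges T)\<^sup>*" using P by auto
  moreover have "sym ((Gamma_edges T)\<^sup>*)" using edges_sym sym_rtrancl by blast
  ultimately show "(X,Y) \<in> (Gamma_edges T)\<^sup>*" by (meson rtrancl_trans symD)
qed

lemma edge_R:
  assumes pq: "(p,q) \<in> Rset" and G: "(p,q,r,s) \<in> GL2"
  shows "(r,s) \<in> (Rset :: ('a::comm_ring_1 \<times> 'a) set)"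
proof -
  obtain w as where w: "w dvd 1" "(p,q) = smul w (rowS as)" using pq unfolding Rset_def by blast
  obtain p0 q0 p1 q1 where SP: "S_prod as = (p0,q0,p1,q1)" by (cases "S_prod as") auto
  have pq': "p = w*p0" "q = w*q0" using w(2) rowS_fst[OF SP] by (auto simp: smul_def)
  obtain di where di: "1 = (p0*q1 - q0*p1) * di"
    using det_S_prod_unit[of as] SP by (auto simp: m2_det_def elim!: dvdE)
  define al where "al = (r*q1 - s*p1)*di"
  define be where "be = (s*p0 - r*q0)*di"
  have er: "al*p0 + be*p1 = r"
  proof -
    have "al*p0 + be*p1 = r*((p0*q1 - q0*p1) * di)" by (simp add: al_def be_def algebra_simps)
    then show ?thesis using di by simp
  qed
  have es: "al*q0 + be*q1 = s"
  proof -
    have "al*q0 + be*q1 = s*((p0*q1 - q0*p1) * di)" by (simp add: al_def be_def algebra_simps)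
    then show ?thesis using di by simp
  qed
  have bd: "be*(p0*q1 - q0*p1) = s*p0 - r*q0"
  proof -
    have "be*(p0*q1 - q0*p1) = (s*p0 - r*q0)*((p0*q1 - q0*p1) * di)" by (simp add: be_def algebra_simps)
    then show ?thesis using di by simp
  qed
  have "m2_det (p,q,r,s) = w*(s*p0 - r*q0)"
    using pq' by (simp add: m2_det_def algebra_simps)
  also have "\<dots> = w*(be*(p0*q1 - q0*p1))" by (simp only: bd)
  also have "\<dots> = be * (w*(p0*q1 - q0*p1))" by (simp add: algebra_simps)
  finally have "m2_det (p,q,r,s) = be * (w*(p0*q1 - q0*p1))" .
  then have "be dvd m2_det (p,q,r,s)" by simp
  moreover have "m2_det (p,q,r,s) dvd 1" using G by (simp add: GL2_def)
  ultimately have "be dvd 1" by (rule dvd_trans)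
  then obtain bi where bi: "1 = be*bi" by (auto elim!: dvdE)
  define t where "t = al*bi"
  have "rowS (as@[t]) = (t*p0 + p1, t*q0 + q1)" by (simp add: rowS_snoc SP rmul_def)
  moreover have "be*(t*p0 + p1) = r" 
  proof -
    have "be*(t*p0 + p1) = al*p0*(be*bi) + be*p1" by (simp add: t_def algebra_simps)
    then show ?thesis using bi er by simp
  qed
  moreover have "be*(t*q0 + q1) = s" 
  proof -
    have "be*(t*q0 + q1) = al*q0*(be*bi) + be*q1" by (simp add: t_def algebra_simps)
    then show ?thesis using bi es by simp
  qed
  ultimately have "(r,s) = smul be (rowS (as@[t]))" by (simp add: smul_def)
  then show ?thesis using RI[OF \<open>be dvd 1\<close>] by simp
qed

lemma C1_CR: "Gamma_path_connected (T::'a::comm_ring_1 itself) \<Longrightarrow> CR TYPE('a)"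
  unfolding CR_def
proof (intro allI impI)
  fix a b :: 'a
  assume pc: "Gamma_path_connected T" and u: "unimodular (a,b)"
  have u10: "unimodular (1::'a, 0::'a)" by (auto simp: unimodular_def intro!: exI[of _ 1])
  have "(cls (1,0), cls (a,b)) \<in> (Gamma_edges T)\<^sup>*"
    using pc cls_vertex[OF u10] cls_vertex[OF u] unfolding Gamma_path_connected_def by blast
  then have "cls (a,b) \<subseteq> Rset"
  proof (induction rule: rtrancl_induct)
    case base
    show ?case
    proof
      fix y assume "y \<in> cls (1::'a,0::'a)"
      then obtain v where "v dvd 1" "y = smul v (1,0)" by (auto simp: unit_equiv_iff)
      then show "y \<in> Rset" using RI[of v "[]"] by simp
    qed
  next
    case (step Y Z)
    from step.hyps(2) obtain p q r s where h: "Z \<in> Gamma_vertices T" "(p,q) \<in> Y" "(r,s) \<in> Z"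
      "(p,q,r,s) \<in> GL2" unfolding Gamma_edges_def by blast
    have rs: "(r,s) \<in> Rset" using edge_R[OF _ h(4)] h(2) step.IH by blast
    from h(1) obtain z0 where z0: "Z = cls z0" unfolding Gamma_vertices_def by (auto elim!: quotientE)
    show ?case
    proof
      fix z' assume "z' \<in> Z"
      then have "(z0, z') \<in> unit_equiv" "(z0, (r,s)) \<in> unit_equiv" using z0 h(3) by auto
      then have "((r,s), z') \<in> unit_equiv" using equiv_ue
        by (metis equiv_def symD transD)
      then obtain v where "v dvd 1" "z' = smul v (r,s)" by (auto simp: unit_equiv_iff)
      then show "z' \<in> Rset" using R_smul[OF rs] by simp
    qed
  qed
  then show "(a,b) \<in> Rset" using in_cls[OF u] by blast
qed



lemma unit_nz: "(w::'a::idom) dvd 1 \<Longrightarrow> w \<noteq> 0"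
  by auto

lemma C2_CR:
  assumes c2: "\<forall>x :: 'a::idom fract P1. bezout_point x \<longrightarrow> (\<exists>as :: 'a list. as \<noteq> [] \<and> x = act Infty (S_prod as))"
  shows "CR TYPE('a)"
  unfolding CR_def
proof (intro allI impI)
  fix a b :: 'a assume u: "unimodular (a,b)"
  have "bezout_point (hom_pt (tf a) (tf b))" using unimod_bezout[OF u] by (auto simp: bezout_point_def)
  then obtain as :: "'a list" where "hom_pt (tf a) (tf b) = act Infty (S_prod as)" using c2 by blast
  obtain p q where pq: "rowS as = (p,q)" by (cases "rowS as") auto
  have "hom_pt (tf a) (tf b) = hom_pt (tf p) (tf q)"
    using \<open>hom_pt (tf a) (tf b) = act Infty (S_prod as)\<close> by (simp add: act_Infty_S_prod pq)
  then have "a*q = b*p" by (rule hom_pt_eq_cross)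
  then obtain w where "w dvd 1" "a = w*p" "b = w*q"
    using unit_prop[OF u, of p q] unimodular_rowS[of as] pq by auto
  then have "(a,b) = smul w (rowS as)" using pq by (simp add: smul_def)
  then show "(a,b) \<in> Rset" using RI[OF \<open>w dvd 1\<close>] by simp
qed

lemma CR_C2:
  assumes cr: "CR TYPE('a::idom)"
  shows "\<forall>x :: 'a fract P1. bezout_point x \<longrightarrow> (\<exists>as :: 'a list. as \<noteq> [] \<and> x = act Infty (S_prod as))"
proof (intro allI impI)
  fix x :: "'a fract P1" assume "bezout_point x"
  then obtain a b where ab: "bezout_pair a b" "x = hom_pt (tf a) (tf b)" by (auto simp: bezout_point_def)
  obtain d a' b' where d: "d \<noteq> 0" "a = d*a'" "b = d*b'" "unimodular (a',b')"
    using bezout_decomp[OF ab(1)] by blast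
  have "(a',b') \<in> Rset" using cr d(4) by (simp add: CR_def)
  then obtain w as where w: "w dvd 1" "(a',b') = smul w (rowS as)" unfolding Rset_def by blast
  obtain p q where pq: "rowS as = (p,q)" by (cases "rowS as") auto
  have "a = (d*w)*p" "b = (d*w)*q" using d w pq by (auto simp: smul_def)
  moreover have "d*w \<noteq> 0" using d(1) unit_nz[OF w(1)] by simp
  ultimately have "x = hom_pt (tf p) (tf q)" using ab(2) hom_pt_scale by metis
  also have "\<dots> = act Infty (S_prod (as@[0,0]))" by (simp add: act_Infty_S_prod rowS_pad pq)
  finally show "\<exists>as :: 'a list. as \<noteq> [] \<and> x = act Infty (S_prod as)" by blast
qed

lemma C5_C2:
  "(\<forall>x :: 'a::idom fract P1. bezout_point x \<longrightarrow> (\<exists>as :: 'a list. as \<noteq> [] \<and> x = cont_frac as)) \<longleftrightarrow>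
   (\<forall>x :: 'a fract P1. bezout_point x \<longrightarrow> (\<exists>as :: 'a list. as \<noteq> [] \<and> x = act Infty (S_prod as)))"
proof -
  have "\<And>as::'a list. as \<noteq> [] \<Longrightarrow> cont_frac as = act Infty (S_prod as)"
    by (simp add: cont_frac_rowS act_Infty_S_prod)
  then show ?thesis by metis
qed

lemma C3_CR:
  assumes c3: "\<forall>a b :: 'a::idom. bezout_pair a b \<longrightarrow> weak_euclid a b"
  shows "CR TYPE('a)"
  unfolding CR_def
proof (intro allI impI)
  fix a b :: 'a assume u: "unimodular (a,b)"
  then have "weak_euclid a b" using c3 unimod_bezout by blast
  then obtain d as where h: "a = d * fst (rowS as)" "b = d * snd (rowS as)"
    using rowS_from_weak_euclid by blast
  obtain x y where xy: "x*a + y*b = 1" using u by (auto simp: unimodular_def)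
  have "1 = d * (x * fst (rowS as) + y * snd (rowS as))" using xy h by (simp add: algebra_simps)
  then have "d dvd 1" by (rule dvdI)
  moreover have "(a,b) = smul d (rowS as)" using h by (simp add: smul_def)
  ultimately show "(a,b) \<in> Rset" using RI by simp
qed

lemma CR_C3:
  assumes cr: "CR TYPE('a::idom)"
  shows "\<forall>a b :: 'a. bezout_pair a b \<longrightarrow> weak_euclid a b"
proof (intro allI impI)
  fix a b :: 'a assume "bezout_pair a b"
  then obtain d a' b' where d: "d \<noteq> 0" "a = d*a'" "b = d*b'" "unimodular (a',b')"
    using bezout_decomp by blast
  have "(a',b') \<in> Rset" using cr d(4) by (simp add: CR_def)
  then obtain w as where w: "w dvd 1" "(a',b') = smul w (rowS as)" unfolding Rset_def by blast
  have "a = (d*w) * fst (rowS (as@[0,0]))" "b = (d*w) * snd (rowS (as@[0,0]))"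
    using d w by (auto simp: smul_def rowS_pad)
  then show "weak_euclid a b" using weak_euclid_from_rowS[of "as@[0,0]" "d*w"] by simp
qed

theorem corollary3p11:
  fixes T :: "'a::idom itself"
  defines "C1 \<equiv> Gamma_path_connected T"
      and "C2 \<equiv> (\<forall>x :: 'a fract P1. bezout_point x \<longrightarrow>
                   (\<exists>as :: 'a list. as \<noteq> [] \<and> x = act Infty (S_prod as)))"
      and "C3 \<equiv> (\<forall>a b :: 'a. bezout_pair a b \<longrightarrow> weak_euclid a b)"
      and "C4 \<equiv> GE2_ring T"
      and "C5 \<equiv> (\<forall>x :: 'a fract P1. bezout_point x \<longrightarrow>
                   (\<exists>as :: 'a list. as \<noteq> [] \<and> x = cont_frac as))"
  shows "(C1 \<longleftrightarrow> C2) \<and> (C1 \<longleftrightarrow> C3) \<and> (C1 \<longleftrightarrow> C4) \<and> (C1 \<longleftrightarrow> C5)"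
proof -
  have e1: "C1 \<longleftrightarrow> CR TYPE('a)" unfolding C1_def using C1_CR CR_C1 by blast
  have e2: "C2 \<longleftrightarrow> CR TYPE('a)" unfolding C2_def using C2_CR CR_C2 by blast
  have e3: "C3 \<longleftrightarrow> CR TYPE('a)" unfolding C3_def using C3_CR CR_C3 by blast
  have e4': "C4 \<longleftrightarrow> GE2_ring TYPE('a)" by (simp add: C4_def GE2_ring_def)
  have e4: "C4 \<longleftrightarrow> CR TYPE('a)" unfolding e4' using C4_CR CR_C4 by blast
  have e5: "C5 \<longleftrightarrow> C2" unfolding C5_def C2_def by (rule C5_C2)
  show ?thesis using e1 e2 e3 e4 e5 by blast
qed


end
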